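(* Let $q$ be a prime power, let $m,n$ be positive integers and let $\mathcal{C}_2 \subsetneqq \mathcal{C}_1 \subseteq \mathbb{F}_q^{m \times n}$ be $\mathbb{F}_q$-linear codes, with $\ell = \dim(\mathcal{C}_1) - \dim(\mathcal{C}_2)$. Encode a message as follows: fix a subspace $\mathcal{W}$ with $\mathcal{C}_1 = \mathcal{C}_2 \oplus \mathcal{W}$ and an $\mathbb{F}_q$-linear isomorphism $\psi : \mathbb{F}_q^\ell \to \mathcal{W}$; the message $\mathbf{x}$ is uniformly distributed on $\mathbb{F}_q^\ell$ and is encoded as $C = \psi(\mathbf{x}) + D$, where $D$ is uniformly distributed on $\mathcal{C}_2$ and independent of $\mathbf{x}$. An adversary wire-tapping $\mu$ links observes $CB^T \in \mathbb{F}_q^{m \times \mu}$ for some matrix $B \in \mathbb{F}_q^{\mu \times n}$. Mutual information $I(\cdot;\cdot)$ is computed with logarithms to base $q$. Then: (1) for every integer $1 \leq r \leq \ell$, $d_{M,r}(\mathcal{C}_2^\perp, \mathcal{C}_1^\perp) = \min\{\mu \geq 0 \mid \exists B \in \mathbb{F}_q^{\mu \times n} \text{ with } I(\mathbf{x}; CB^T) \geq r\}$; (2) for every integer $0 \leq \mu \leq n$, $K_{M,\mu}(\mathcal{C}_2^\perp, \mathcal{C}_1^\perp) = \max\{ I(\mathbf{x}; CB^T) \mid B \in \mathbb{F}_q^{\mu' \times n},\ 0 \leq \mu' \leq \mu\}$ (where for $\mu' = 0$ the observation is trivial and gives zero information); (3) $t = d_R(\mathcal{C}_2^\perp, \mathcal{C}_1^\perp)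 - 1$ is the largest integer $\mu$ such that $I(\mathbf{x}; CB^T) = 0$ for every $B \in \mathbb{F}_q^{\mu \times n}$.
   Context: For $C \in \mathbb{F}_q^{m\times n}$, ${\rm Row}(C) \subseteq \mathbb{F}_q^n$ is its row space and ${\rm Rk}(C) = \dim {\rm Row}(C)$. For a subspace $\mathcal{L} \subseteq \mathbb{F}_q^n$, the rank support space is $\mathcal{V}_\mathcal{L} = \{V \in \mathbb{F}_q^{m \times n} \mid {\rm Row}(V) \subseteq \mathcal{L}\}$. For nested linear codes $\mathcal{D}_2 \subsetneqq \mathcal{D}_1 \subseteq \mathbb{F}_q^{m\times n}$ and $1 \le r \le \dim \mathcal{D}_1 - \dim \mathcal{D}_2$, the $r$-th relative generalized matrix weight is $d_{M,r}(\mathcal{D}_1,\mathcal{D}_2) = \min\{\dim \mathcal{L} \mid \mathcal{L} \subseteq \mathbb{F}_q^n \text{ subspace}, \dim(\mathcal{D}_1 \cap \mathcal{V}_\mathcal{L}) - \dim(\mathcal{D}_2 \cap \mathcal{V}_\mathcal{L}) \geq r\}$; for $0 \le \mu \le n$ the relative dimension/rank support profile is $K_{M,\mu}(\mathcal{D}_1,\mathcal{D}_2) = \max\{\dim(\mathcal{D}_1 \cap \mathcal{V}_\mathcal{L}) - \dim(\mathcal{D}_2 \cap \mathcal{V}_\mathcal{L}) \mid \mathcal{L} \subseteq \mathbb{F}_q^n, \dim \mathcal{L} \le \mu\}$; and $d_R(\mathcal{D}_1,\mathcal{D}_2) = \min\{{\rm Rk}(C) \mid C \in \mathcal{D}_1,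 C \notin \mathcal{D}_2\}$. The dual of a linear code $\mathcal{C} \subseteq \mathbb{F}_q^{m \times n}$ is $\mathcal{C}^\perp = \{D \mid {\rm Trace}(CD^T) = 0 \ \forall C \in \mathcal{C}\}$; note $\mathcal{C}_1^\perp \subsetneqq \mathcal{C}_2^\perp$. *)

theory Defs
  imports "HOL-Library.Function_Algebras" "HOL-Probability.Probability_Mass_Function"
begin

text \<open>Vectors of length n over a field: functions nat => 'a vanishing outside {0..<n}.
  Matrices of size m x n: functions nat => nat => 'a vanishing outside {0..<m} x {0..<n}.\<close>

definition vscale :: "'a::field \<Rightarrow> (nat \<Rightarrow> 'a) \<Rightarrow> (nat \<Rightarrow> 'a)" where
  "vscale c v = (\<lambda>j. c * v j)"

definition mscale :: "'a::field \<Rightarrow> (nat \<Rightarrow> nat \<Rightarrow> 'a) \<Rightarrow> (nat \<Rightarrow> nat \<Rightarrow> 'a)" where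
  "mscale c M = (\<lambda>i j. c * M i j)"

lemma vector_space_vscale: "vector_space (vscale :: 'a::field \<Rightarrow> _)"
  by unfold_locales (auto simp: vscale_def fun_eq_iff algebra_simps)

lemma vector_space_mscale: "vector_space (mscale :: 'a::field \<Rightarrow> _)"
  by unfold_locales (auto simp: mscale_def fun_eq_iff algebra_simps)

definition vecs :: "nat \<Rightarrow> (nat \<Rightarrow> 'a::zero) set" where
  "vecs n = {v. \<forall>j. n \<le> j \<longrightarrow> v j = 0}"

definition mats :: "nat \<Rightarrow> nat \<Rightarrow> (nat \<Rightarrow> nat \<Rightarrow> 'a::zero) set" where
  "mats m n = {M. \<forall>i j. (m \<le> i \<or> n \<le> j) \<longrightarrow> M i j = 0}"

abbreviation vdim :: "(nat \<Rightarrow> 'a::field) set \<Rightarrow> nat" where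
  "vdim \<equiv> vector_space.dim vscale"
abbreviation mdim :: "(nat \<Rightarrow> nat \<Rightarrow> 'a::field) set \<Rightarrow> nat" where
  "mdim \<equiv> vector_space.dim mscale"
abbreviation vsubspace :: "(nat \<Rightarrow> 'a::field) set \<Rightarrow> bool" where
  "vsubspace \<equiv> module.subspace vscale"
abbreviation msubspace :: "(nat \<Rightarrow> nat \<Rightarrow> 'a::field) set \<Rightarrow> bool" where
  "msubspace \<equiv> module.subspace mscale"

definition lin_code :: "nat \<Rightarrow> nat \<Rightarrow> (nat \<Rightarrow> nat \<Rightarrow> 'a::field) set \<Rightarrow> bool" where
  "lin_code m n C \<longleftrightarrow> C \<subseteq> mats m n \<and> msubspace C"

definition row_space :: "nat \<Rightarrow> (nat \<Rightarrow> nat \<Rightarrow> 'a::field) \<Rightarrow> (nat \<Rightarrow> 'a) set" where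
  "row_space m C = module.span vscale {C i | i. i < m}"

definition rk :: "nat \<Rightarrow> (nat \<Rightarrow> nat \<Rightarrow> 'a::field) \<Rightarrow> nat" where
  "rk m C = vdim (row_space m C)"

definition rank_support :: "nat \<Rightarrow> nat \<Rightarrow> (nat \<Rightarrow> 'a::field) set \<Rightarrow> (nat \<Rightarrow> nat \<Rightarrow> 'a) set" where
  "rank_support m n L = {V \<in> mats m n. row_space m V \<subseteq> L}"

text \<open>Trace dual: Trace(C D^T) = sum_{i,j} C_ij D_ij.\<close>
definition dual_code :: "nat \<Rightarrow> nat \<Rightarrow> (nat \<Rightarrow> nat \<Rightarrow> 'a::field) set \<Rightarrow> (nat \<Rightarrow> nat \<Rightarrow> 'a) set" where
  "dual_code m n C = {D \<in> mats m n. \<forall>M\<in>C. (\<Sum>i<m. \<Sum>j<n. M i j * D i j) = 0}"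

definition rgmw :: "nat \<Rightarrow> nat \<Rightarrow> nat \<Rightarrow> (nat \<Rightarrow> nat \<Rightarrow> 'a::field) set \<Rightarrow> (nat \<Rightarrow> nat \<Rightarrow> 'a) set \<Rightarrow> nat" where
  "rgmw m n r D1 D2 = (LEAST k. \<exists>L. L \<subseteq> vecs n \<and> vsubspace L \<and> vdim L = k \<and>
      int (mdim (D1 \<inter> rank_support m n L)) - int (mdim (D2 \<inter> rank_support m n L)) \<ge> int r)"

definition rdrsp :: "nat \<Rightarrow> nat \<Rightarrow> nat \<Rightarrow> (nat \<Rightarrow> nat \<Rightarrow> 'a::field) set \<Rightarrow> (nat \<Rightarrow> nat \<Rightarrow> 'a) set \<Rightarrow> int" where
  "rdrsp m n \<mu> D1 D2 = Max {int (mdim (D1 \<inter> rank_support m n L)) - int (mdim (D2 \<inter> rank_support m n L)) | L.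
      L \<subseteq> vecs n \<and> vsubspace L \<and> vdim L \<le> \<mu>}"

definition rel_rank_dist :: "nat \<Rightarrow> (nat \<Rightarrow> nat \<Rightarrow> 'a::field) set \<Rightarrow> (nat \<Rightarrow> nat \<Rightarrow> 'a) set \<Rightarrow> nat" where
  "rel_rank_dist m D1 D2 = (LEAST k. \<exists>C \<in> D1. C \<notin> D2 \<and> rk m C = k)"

definition mult_transp :: "nat \<Rightarrow> nat \<Rightarrow> nat \<Rightarrow> (nat \<Rightarrow> nat \<Rightarrow> 'a::field) \<Rightarrow> (nat \<Rightarrow> nat \<Rightarrow> 'a) \<Rightarrow> (nat \<Rightarrow> nat \<Rightarrow> 'a)" where
  "mult_transp m n \<mu> C B = (\<lambda>i k. if i < m \<and> k < \<mu> then (\<Sum>j<n. C i j * B k j) else 0)"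

definition mutual_info :: "real \<Rightarrow> 'w pmf \<Rightarrow> ('w \<Rightarrow> 'x) \<Rightarrow> ('w \<Rightarrow> 'y) \<Rightarrow> real" where
  "mutual_info b P X Y =
     (\<Sum>x \<in> X ` set_pmf P. \<Sum>y \<in> Y ` set_pmf P.
        (let pxy = measure_pmf.prob P {w. X w = x \<and> Y w = y};
             px = measure_pmf.prob P {w. X w = x};
             py = measure_pmf.prob P {w. Y w = y}
         in if pxy = 0 then 0 else pxy * log b (pxy / (px * py))))"

text \<open>The wiretap coset coding scheme: (x, D) uniform on F^l x C2 (so x uniform, D uniform
  and independent of x); C = psi x + D; the adversary observes C B^T.\<close>
definition leak_info :: "nat \<Rightarrow> nat \<Rightarrow> nat \<Rightarrow> (nat \<Rightarrow> nat \<Rightarrow> 'a::{finite,field}) set \<Rightarrow>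
    ((nat \<Rightarrow> 'a) \<Rightarrow> (nat \<Rightarrow> nat \<Rightarrow> 'a)) \<Rightarrow> nat \<Rightarrow> (nat \<Rightarrow> nat \<Rightarrow> 'a) \<Rightarrow> real" where
  "leak_info m n l C2 \<psi> \<mu> B =
     mutual_info (real CARD('a)) (pmf_of_set (vecs l \<times> C2)) fst
       (\<lambda>(x, D). mult_transp m n \<mu> (\<psi> x + D) B)"

end

theory Submission
  imports Defs
begin


context vector_space begin

lemma card_span_indep:
  assumes fin: "finite (UNIV :: 'a set)" and "finite B" and "independent B"
  shows "card (span B) = CARD('a) ^ card B \<and> finite (span B)"
  using assms(2,3)
proof (induction B rule: finite_induct)
  case empty
  then show ?case by simp
next
  case (insert a B)
  have indB: "independent B" and aB: "a \<notin> span B"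
    using insert.prems insert.hyps(2) by (auto simp: independent_insert)
  from insert.IH[OF indB] have IH: "card (span B) = CARD('a) ^ card B" "finite (span B)" by auto
  let ?h = "\<lambda>(k, v). scale k a + v"
  have img: "?h ` (UNIV \<times> span B) = span (insert a B)"
  proof
    show "?h ` (UNIV \<times> span B) \<subseteq> span (insert a B)"
    proof clarsimp
      fix k v assume "v \<in> span B"
      then have "v \<in> span (insert a B)" using span_mono[of B "insert a B"] by auto
      moreover have "scale k a \<in> span (insert a B)" by (intro span_scale span_base) simp
      ultimately show "scale k a + v \<in> span (insert a B)" by (metis span_add)
    qed
    show "span (insert a B) \<subseteq> ?h ` (UNIV \<times> span B)"
    proof
      fix x assume "x \<in> span (insert a B)"
      then obtain k where "x - scale k a \<in> span B" by (auto simp: span_insert)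
      then show "x \<in> ?h ` (UNIV \<times> span B)"
        by (intro image_eqI[of _ _ "(k, x - scale k a)"]) auto
    qed
  qed
  have inj: "inj_on ?h (UNIV \<times> span B)"
  proof (rule inj_onI, clarsimp)
    fix k v k' v'
    assume v: "v \<in> span B" and v': "v' \<in> span B" and eq: "scale k a + v = scale k' a + v'"
    have "scale (k - k') a = v' - v" using eq by (simp add: algebra_simps scale_left_diff_distrib)
    then have "scale (k - k') a \<in> span B" using v v' by (simp add: span_diff)
    then have "k = k'" using aB
      by (metis eq_iff_diff_eq_0 span_scale scale_one scale_scale left_inverse)
    then show "k = k' \<and> v = v'" using eq by simp
  qed
  have "card (span (insert a B)) = card ((UNIV::'a set) \<times> span B)"
    using card_image[OF inj] img by simp
  also have "\<dots> = CARD('a) * CARD('a) ^ card B" using IH by (simp add: card_cartesian_product)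
  moreover have "finite (span (insert a B))"
    using img[symmetric] IH(2) fin by (metis finite_SigmaI finite_imageI)
  ultimately show ?case using insert.hyps by simp
qed

lemma card_subspace:
  assumes fin: "finite (UNIV :: 'a set)" and "finite S" and "subspace S"
  shows "card S = CARD('a) ^ dim S"
proof -
  obtain B where B: "B \<subseteq> S" "independent B" "S \<subseteq> span B" "card B = dim S" by (rule basis_exists)
  have "finite B" using B(1) assms(2) finite_subset by auto
  have "span B = S" using span_subspace[OF B(1) B(3) assms(3)] .
  then show ?thesis using card_span_indep[OF fin \<open>finite B\<close> B(2)] B(4) by simp
qed

end


interpretation VS: vector_space "vscale :: 'a::field \<Rightarrow> (nat \<Rightarrow> 'a) \<Rightarrow> _"
  by (rule vector_space_vscale)
interpretation MS: vector_space "mscale :: 'a::field \<Rightarrow> (nat \<Rightarrow> nat \<Rightarrow> 'a) \<Rightarrow> _"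
  by (rule vector_space_mscale)

section \<open>Counting fibres of additive maps\<close>

lemma coset_card:
  fixes g :: "'b::ab_group_add \<Rightarrow> 'c::ab_group_add"
  assumes add: "\<And>x y. g (x + y) = g x + g y"
    and sub: "\<And>x y. x \<in> X \<Longrightarrow> y \<in> X \<Longrightarrow> x - y \<in> X"
    and addc: "\<And>x y. x \<in> X \<Longrightarrow> y \<in> X \<Longrightarrow> x + y \<in> X"
    and x0: "x0 \<in> X" "g (b + x0) = y"
  shows "card {x\<in>X. g (b + x) = y} = card {x\<in>X. g x = 0}"
proof -
  have g0: "g 0 = 0" using add[of 0 0] by simp
  have gd: "g (x - z) = g x - g z" for x z using add[of "x - z" z] by (simp add: algebra_simps)
  let ?K = "{x\<in>X. g x = 0}"
  have "{x\<in>X. g (b + x) = y} = (\<lambda>z. x0 + z) ` ?K"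
  proof (rule set_eqI, rule iffI)
    fix x assume x: "x \<in> {x\<in>X. g (b + x) = y}"
    have "g (x - x0) = 0" using x x0 gd[of "b + x" "b + x0"] by (simp add: algebra_simps)
    then show "x \<in> (\<lambda>z. x0 + z) ` ?K" using x x0 sub
      by (intro image_eqI[of _ _ "x - x0"]) auto
  next
    fix x assume "x \<in> (\<lambda>z. x0 + z) ` ?K"
    then obtain z where z: "z \<in> X" "g z = 0" "x = x0 + z" by auto
    then show "x \<in> {x\<in>X. g (b + x) = y}" using x0 addc add[of "b + x0" z]
      by (simp add: add.assoc)
  qed
  moreover have "inj_on (\<lambda>z. x0 + z) ?K" by (rule inj_onI) simp
  ultimately show ?thesis by (simp add: card_image)
qed

lemma card_image_kernel:
  fixes g :: "'b::ab_group_add \<Rightarrow> 'c::ab_group_add"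
  assumes fin: "finite X"
    and add: "\<And>x y. g (x + y) = g x + g y"
    and sub: "\<And>x y. x \<in> X \<Longrightarrow> y \<in> X \<Longrightarrow> x - y \<in> X"
    and addc: "\<And>x y. x \<in> X \<Longrightarrow> y \<in> X \<Longrightarrow> x + y \<in> X"
  shows "card X = card (g ` X) * card {x\<in>X. g x = 0}"
proof -
  have "card X = (\<Sum>y\<in>g ` X. \<Sum>x\<in>{x. x \<in> X \<and> g x = y}. 1)"
    using sum.group[OF fin finite_imageI[OF fin] subset_refl, where g=g and h="\<lambda>_. 1::nat"] by simp
  also have "\<dots> = (\<Sum>y\<in>g ` X. card {x\<in>X. g x = 0})"
  proof (rule sum.cong[OF refl])
    fix y assume "y \<in> g ` X"
    then obtain x0 where "x0 \<in> X" "g (0 + x0) = y" by auto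
    from coset_card[of g X, OF add sub addc this] show "(\<Sum>x\<in>{x. x \<in> X \<and> g x = y}. 1) = card {x\<in>X. g x = 0}"
      by simp
  qed
  finally show ?thesis by simp
qed

section \<open>Matrices and vectors\<close>

lemma sum_fun_apply: "(\<Sum>x\<in>A. f x) i = (\<Sum>x\<in>A. f x i)"
  by (induction A rule: infinite_finite_induct) auto

lemma mats_bij:
  "bij_betw (\<lambda>M. \<lambda>p\<in>{..<R}\<times>{..<C}. M (fst p) (snd p)) (mats R C)
     (PiE ({..<R}\<times>{..<C}) (\<lambda>_. (UNIV :: 'a::zero set)))"
  by (rule bij_betw_byWitness[where f' = "\<lambda>F i j. if i < R \<and> j < C then F (i, j) else 0"])
     (auto simp: mats_def fun_eq_iff PiE_def extensional_def not_less)

lemma card_mats: "card (mats R C :: (nat \<Rightarrow> nat \<Rightarrow> 'a::{finite,zero}) set) = CARD('a) ^ (R * C)"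
  using bij_betw_same_card[OF mats_bij[where 'a='a, of R C]]
  by (simp add: card_PiE card_cartesian_product power_mult)

lemma finite_mats [simp]: "finite (mats R C :: (nat \<Rightarrow> nat \<Rightarrow> 'a::{finite,zero}) set)"
  using bij_betw_finite[OF mats_bij[where 'a='a, of R C]] by (simp add: finite_PiE)

lemma finite_vecs [simp]: "finite (vecs n :: (nat \<Rightarrow> 'a::{finite,zero}) set)"
proof -
  have "bij_betw (\<lambda>v. \<lambda>p\<in>{..<n}. v p) (vecs n) (PiE {..<n} (\<lambda>_. (UNIV :: 'a set)))"
    by (rule bij_betw_byWitness[where f' = "\<lambda>F i. if i < n then F i else 0"])
       (auto simp: vecs_def fun_eq_iff PiE_def extensional_def not_less)
  from bij_betw_finite[OF this] show ?thesis by (simp add: finite_PiE)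
qed

lemma subspace_mats: "MS.subspace (mats R C)"
  by (auto simp: MS.subspace_def mats_def mscale_def)

lemma subspace_vecs: "VS.subspace (vecs n)"
  by (auto simp: VS.subspace_def vecs_def vscale_def)

definition ip :: "nat \<Rightarrow> nat \<Rightarrow> (nat \<Rightarrow> nat \<Rightarrow> 'a::field) \<Rightarrow> (nat \<Rightarrow> nat \<Rightarrow> 'a) \<Rightarrow> 'a" where
  "ip R C X Y = (\<Sum>i<R. \<Sum>j<C. X i j * Y i j)"

lemma dual_code_ip: "dual_code R C S = {D \<in> mats R C. \<forall>M\<in>S. ip R C M D = 0}"
  by (simp add: dual_code_def ip_def)

lemma ip_add_right: "ip R C X (Y + Z) = ip R C X Y + ip R C X Z"
  by (simp add: ip_def distrib_left sum.distrib)
lemma ip_add_left: "ip R C (X + Y) Z = ip R C X Z + ip R C Y Z"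
  by (simp add: ip_def distrib_right sum.distrib)
lemma ip_scale_left: "ip R C (mscale c X) Z = c * ip R C X Z"
  by (simp add: ip_def mscale_def sum_distrib_left mult.assoc)
lemma ip_scale_right: "ip R C X (mscale c Z) = c * ip R C X Z"
  by (simp add: ip_def mscale_def sum_distrib_left mult.left_commute)
lemma ip_zero_left [simp]: "ip R C 0 Z = 0"
  by (simp add: ip_def)
lemma ip_sum_left: "ip R C (\<Sum>j\<in>J. f j) Z = (\<Sum>j\<in>J. ip R C (f j) Z)"
proof (induction J rule: infinite_finite_induct)
  case (insert x F)
  show ?case unfolding sum.insert[OF insert.hyps] ip_add_left insert.IH ..
next
  case (infinite A)
  show ?case unfolding sum.infinite[OF infinite] by (rule ip_zero_left)
qed (simp only: sum.empty ip_zero_left)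

lemma subspace_dual: "MS.subspace (dual_code R C S)"
  unfolding dual_code_ip MS.subspace_def
  using subspace_mats[unfolded MS.subspace_def]
  by (auto simp: ip_add_right ip_scale_right) (simp add: ip_def)

lemma card_subspace_ms:
  "MS.subspace (S :: (nat \<Rightarrow> nat \<Rightarrow> 'a::{finite,field}) set) \<Longrightarrow> finite S \<Longrightarrow> card S = CARD('a) ^ MS.dim S"
  using MS.card_subspace[of S] by simp

lemma card_subspace_vs:
  "VS.subspace (S :: (nat \<Rightarrow> 'a::{finite,field}) set) \<Longrightarrow> finite S \<Longrightarrow> card S = CARD('a) ^ VS.dim S"
  using VS.card_subspace[of S] by simp

lemma ms_basis_indexed:
  fixes S :: "(nat \<Rightarrow> nat \<Rightarrow> 'a::{finite,field}) set"
  assumes "finite S" "MS.subspace S"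
  obtains k b where "inj_on b {..<k}" "b ` {..<k} \<subseteq> S" "MS.span (b ` {..<k}) = S"
    "MS.independent (b ` {..<k})" "card S = CARD('a) ^ k"
proof -
  obtain B where B: "B \<subseteq> S" "MS.independent B" "S \<subseteq> MS.span B" "card B = MS.dim S"
    by (rule MS.basis_exists)
  have fB: "finite B" using B(1) assms(1) finite_subset by auto
  obtain b where b: "bij_betw b {0..<card B} B" using ex_bij_betw_nat_finite[OF fB] by blast
  have "MS.span B = S" using MS.span_subspace[OF B(1) B(3) assms(2)] .
  then show ?thesis using that[of b "card B"] b B card_subspace_ms[OF assms(2,1)]
    by (auto simp: bij_betw_def lessThan_atLeast0)
qed


section \<open>Duality\<close>

lemma subspace_ip_zero: "MS.subspace {M. ip R C M A = 0}"
  by (auto simp: MS.subspace_def ip_add_left ip_scale_left)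

lemma dual_g:
  fixes S :: "(nat \<Rightarrow> nat \<Rightarrow> 'a::{finite,field}) set"
    and b :: "nat \<Rightarrow> (nat \<Rightarrow> nat \<Rightarrow> 'a)" and R C k :: nat
  assumes S: "MS.subspace S" and b: "MS.span (b ` {..<k}) = S"
  defines "g \<equiv> \<lambda>A i j. if i = 0 \<and> j < k then ip R C (b j) A else 0"
  shows "card (mats R C :: (nat \<Rightarrow> nat \<Rightarrow> 'a) set) = card (g ` mats R C) * card (dual_code R C S)"
    and "g ` mats R C \<subseteq> mats 1 k"
    and "\<And>A A'. g (A + A') = g A + g A'" and "\<And>c A. g (mscale c A) = mscale c (g A)"
proof -
  show add: "\<And>A A'. g (A + A') = g A + g A'"
    by (auto simp: g_def fun_eq_iff ip_add_right)
  show "\<And>c A. g (mscale c A) = mscale c (g A)"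
    using ip_scale_right by (auto simp: g_def fun_eq_iff mscale_def)
  show "g ` mats R C \<subseteq> mats 1 k" by (auto simp: g_def mats_def)
  have ker: "{A\<in>mats R C. g A = 0} = dual_code R C S"
  proof (rule set_eqI, rule iffI)
    fix A assume A: "A \<in> {A\<in>mats R C. g A = 0}"
    then have "\<forall>j<k. ip R C (b j) A = 0"
      by (auto simp: g_def fun_eq_iff) (metis)
    then have "b ` {..<k} \<subseteq> {M. ip R C M A = 0}" by auto
    then have "S \<subseteq> {M. ip R C M A = 0}"
      using MS.span_minimal[OF _ subspace_ip_zero] b by blast
    then show "A \<in> dual_code R C S" using A by (auto simp: dual_code_ip)
  next
    fix A assume A: "A \<in> dual_code R C S"
    have "b j \<in> S" if "j < k" for j using b MS.span_base[of "b j" "b ` {..<k}"] that by auto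
    then show "A \<in> {A\<in>mats R C. g A = 0}" using A
      by (auto simp: dual_code_ip g_def fun_eq_iff)
  qed
  have "card (mats R C :: (nat \<Rightarrow> nat \<Rightarrow> 'a) set) = card (g ` mats R C) * card {A\<in>mats R C. g A = 0}"
  proof (rule card_image_kernel[where X="mats R C" and g=g])
    show "finite (mats R C :: (nat \<Rightarrow> nat \<Rightarrow> 'a) set)" by simp
  qed (use add in \<open>auto simp: mats_def\<close>)
  then show "card (mats R C :: (nat \<Rightarrow> nat \<Rightarrow> 'a) set) = card (g ` mats R C) * card (dual_code R C S)" using ker by simp
qed

lemma dual_weak:
  fixes S :: "(nat \<Rightarrow> nat \<Rightarrow> 'a::{finite,field}) set"
  assumes S: "S \<subseteq> mats R C" "MS.subspace S"
  shows "CARD('a) ^ (R * C) \<le> card (dual_code R C S) * card S"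
proof -
  have fS: "finite S" using S(1) finite_subset finite_mats by blast
  obtain k b where kb: "inj_on b {..<k}" "b ` {..<k} \<subseteq> S" "MS.span (b ` {..<k}) = S"
    "MS.independent (b ` {..<k})" "card S = CARD('a) ^ k"
    using ms_basis_indexed[OF fS S(2)] by metis
  note G = dual_g[OF S(2) kb(3), where R=R and C=C]
  have "card ((\<lambda>A (i::nat) j. if i = 0 \<and> j < k then ip R C (b j) A else 0) ` mats R C) \<le> card (mats 1 k :: (nat \<Rightarrow> nat \<Rightarrow> 'a) set)"
    using G(2) by (intro card_mono[where B="mats 1 k"]) auto
  then have "card ((\<lambda>A (i::nat) j. if i = 0 \<and> j < k then ip R C (b j) A else 0) ` mats R C) \<le> card S"
    using card_mats[where 'a='a, of 1 k] kb(5) by simp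
  then have "card (mats R C :: (nat \<Rightarrow> nat \<Rightarrow> 'a) set) \<le> card S * card (dual_code R C S)"
    unfolding G(1) by (rule mult_le_mono1)
  then show ?thesis using card_mats[where 'a='a, of R C] by (simp add: mult.commute)
qed


lemma mats_scale: "A \<in> mats R C \<Longrightarrow> mscale c A \<in> mats R C"
  by (auto simp: mats_def mscale_def)

lemma ip_unit:
  fixes s :: "nat \<Rightarrow> nat \<Rightarrow> 'a::field"
  assumes "a < R" "b < C"
  shows "ip R C s (\<lambda>i j. if i = a \<and> j = b then 1 else 0) = s a b"
proof -
  have "ip R C s (\<lambda>i j. if i = a \<and> j = b then 1 else 0) = (\<Sum>i<R. \<Sum>j<C. if i = a \<and> j = b then s i j else 0)"
    unfolding ip_def by (intro sum.cong refl) auto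
  also have "\<dots> = (\<Sum>i<R. if i = a then s i b else 0)"
    using assms by (intro sum.cong refl) (auto simp: sum.delta)
  also have "\<dots> = s a b" using assms by (simp add: sum.delta)
  finally show ?thesis .
qed

lemma dual_card:
  fixes S :: "(nat \<Rightarrow> nat \<Rightarrow> 'a::{finite,field}) set"
  assumes S: "S \<subseteq> mats R C" "MS.subspace S"
  shows "card (dual_code R C S) * card S = CARD('a) ^ (R * C)"
proof -
  have fS: "finite S" using S(1) finite_subset finite_mats by blast
  obtain k b where kb: "inj_on b {..<k}" "b ` {..<k} \<subseteq> S" "MS.span (b ` {..<k}) = S"
    "MS.independent (b ` {..<k})" "card S = CARD('a) ^ k"
    using ms_basis_indexed[OF fS S(2)] by metis
  define g where "g = (\<lambda>A (i::nat) (j::nat). if i = 0 \<and> j < k then ip R C (b j) A else 0)"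
  note G = dual_g[OF S(2) kb(3), where R=R and C=C, folded g_def]
  define T where "T = g ` mats R C"
  have T: "T = mats 1 k"
  proof (rule ccontr)
    assume ne: "T \<noteq> mats 1 k"
    have Tsub: "T \<subseteq> mats 1 k" using G(2) T_def by simp
    have g0: "g 0 = 0" by (simp add: g_def fun_eq_iff ip_def)
    have Tss: "MS.subspace T"
      unfolding MS.subspace_def T_def
    proof (intro conjI ballI allI)
      show "0 \<in> g ` mats R C" using g0 MS.subspace_0[OF subspace_mats] by force
    next
      fix x y assume "x \<in> g ` mats R C" "y \<in> g ` mats R C"
      then obtain A A' where "A \<in> mats R C" "A' \<in> mats R C" "x = g A" "y = g A'" by auto
      then have "x + y = g (A + A')" using G(3) by (simp add: g_def)
      moreover have "A + A' \<in> mats R C" using \<open>A \<in> mats R C\<close> \<open>A' \<in> mats R C\<close>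
        by (auto simp: mats_def)
      ultimately show "x + y \<in> g ` mats R C" by blast
    next
      fix c x assume "x \<in> g ` mats R C"
      then obtain A where "A \<in> mats R C" "x = g A" by auto
      then have "mscale c x = g (mscale c A)" using G(4) by (simp add: g_def)
      moreover have "mscale c A \<in> mats R C" using \<open>A \<in> mats R C\<close> by (rule mats_scale)
      ultimately show "mscale c x \<in> g ` mats R C" by blast
    qed
    have "card T < card (mats 1 k :: (nat \<Rightarrow> nat \<Rightarrow> 'a) set)"
      using psubset_card_mono[of "mats 1 k" T] ne Tsub by auto
    then have lt: "card T < CARD('a) ^ k" using card_mats[where 'a='a, of 1 k] by simp
    have le: "CARD('a) ^ k \<le> card (dual_code 1 k T) * card T"
      using dual_weak[OF Tsub Tss] by simp
    have "\<exists>c \<in> dual_code 1 k T. c \<noteq> 0"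
    proof (rule ccontr)
      assume "\<not> ?thesis"
      then have "dual_code 1 k T \<subseteq> {0}" by auto
      then have "card (dual_code 1 k T) \<le> card {0::nat \<Rightarrow> nat \<Rightarrow> 'a}" by (intro card_mono) simp_all
      then have "card (dual_code 1 k T) \<le> 1" by simp
      then have "card (dual_code 1 k T) * card T \<le> card T" by simp
      then show False using lt le by linarith
    qed
    then obtain c where c: "c \<in> dual_code 1 k T" "c \<noteq> 0" by blast
    define s where "s = (\<Sum>j<k. mscale (c 0 j) (b j))"
    have ips: "ip R C s A = 0" if A: "A \<in> mats R C" for A
    proof -
      have "ip R C s A = (\<Sum>j<k. c 0 j * ip R C (b j) A)"
        unfolding s_def ip_sum_left ip_scale_left ..
      also have "\<dots> = ip 1 k (g A) c"
        by (simp add: ip_def g_def mult.commute)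
      also have "\<dots> = 0" using c(1) A by (auto simp: dual_code_ip T_def)
      finally show ?thesis .
    qed
    have smats: "s \<in> mats R C" unfolding s_def
      using kb(2) S(1) by (intro MS.subspace_sum[OF subspace_mats] mats_scale) auto
    have s0: "s = 0"
    proof (rule ext, rule ext)
      fix a b' show "s a b' = 0 a b'"
      proof (cases "a < R \<and> b' < C")
        case True
        have "(\<lambda>i j. if i = a \<and> j = b' then 1 else 0) \<in> (mats R C :: (nat \<Rightarrow> nat \<Rightarrow> 'a) set)"
          using True by (auto simp: mats_def)
        from ips[OF this] show ?thesis using ip_unit[of a R b' C s] True by simp
      next
        case False then show ?thesis using smats by (auto simp: mats_def not_less)
      qed
    qed
    have "\<exists>j<k. c 0 j \<noteq> 0"
    proof (rule ccontr)
      assume "\<not> ?thesis"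
      then have "c = 0"
      proof (intro ext)
        fix i j assume nz: "\<not> (\<exists>j<k. c 0 j \<noteq> 0)"
        have cm: "c \<in> mats 1 k" using c(1) by (simp add: dual_code_ip)
        show "c i j = 0 i j"
        proof (cases "i = 0 \<and> j < k")
          case True then show ?thesis using nz by auto
        next
          case False then show ?thesis using cm by (auto simp: mats_def not_less)
        qed
      qed
      then show False using c(2) by simp
    qed
    then obtain j0 where j0: "j0 < k" "c 0 j0 \<noteq> 0" by blast
    let ?u = "\<lambda>v. c 0 (the_inv_into {..<k} b v)"
    have "(\<Sum>v\<in>b ` {..<k}. mscale (?u v) v) = (\<Sum>j<k. mscale (?u (b j)) (b j))"
      by (rule sum.reindex[OF kb(1), unfolded comp_def])
    also have "\<dots> = s" unfolding s_def
      by (intro sum.cong refl) (simp add: the_inv_into_f_f[OF kb(1)])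
    finally have "(\<Sum>v\<in>b ` {..<k}. mscale (?u v) v) = 0" using s0 by simp
    moreover have "?u (b j0) \<noteq> 0" using j0 the_inv_into_f_f[OF kb(1)] by simp
    ultimately have "MS.dependent (b ` {..<k})"
      unfolding MS.dependent_explicit using j0(1) by (intro exI[of _ "b ` {..<k}"] exI[of _ ?u]) auto
    then show False using kb(4) by simp
  qed
  have "card (mats R C :: (nat \<Rightarrow> nat \<Rightarrow> 'a) set) = card (mats 1 k :: (nat \<Rightarrow> nat \<Rightarrow> 'a) set) * card (dual_code R C S)"
    using G(1) T T_def by simp
  then show ?thesis using card_mats[where 'a='a, of 1 k] card_mats[where 'a='a, of R C] kb(5)
    by (simp add: mult.commute)
qed




definition hmul :: "nat \<Rightarrow> (nat \<Rightarrow> nat \<Rightarrow> 'a::field) \<Rightarrow> (nat \<Rightarrow> nat \<Rightarrow> 'a) \<Rightarrow> (nat \<Rightarrow> nat \<Rightarrow> 'a)" where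
  "hmul \<mu> B A = (\<lambda>i j. \<Sum>k<\<mu>. A i k * B k j)"

lemma span_rep:
  fixes B :: "nat \<Rightarrow> nat \<Rightarrow> 'a::field"
  assumes "v \<in> VS.span {B k | k. k < \<mu>}"
  shows "\<exists>a. \<forall>j. v j = (\<Sum>k<\<mu>. a k * B k j)"
  using assms
proof (induction rule: VS.span_induct_alt)
  case base
  show ?case by (intro exI[of _ "\<lambda>_. 0"]) simp
next
  case (step c x y)
  then obtain k0 a where k0: "k0 < \<mu>" "x = B k0" and a: "\<forall>j. y j = (\<Sum>k<\<mu>. a k * B k j)" by auto
  show ?case
  proof (intro exI[of _ "\<lambda>k. a k + (if k = k0 then c else 0)"] allI)
    fix j
    have e1: "(\<Sum>k<\<mu>. (a k + (if k = k0 then c else 0)) * B k j)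
        = (\<Sum>k<\<mu>. a k * B k j) + (\<Sum>k<\<mu>. (if k = k0 then c else 0) * B k j)"
      by (simp add: distrib_right sum.distrib)
    have "(\<Sum>k<\<mu>. (if k = k0 then c else 0) * B k j) = (\<Sum>k<\<mu>. (if k = k0 then c * B k j else 0))"
      by (rule sum.cong) auto
    also have "\<dots> = c * B k0 j" using k0 by (simp add: sum.delta)
    finally have z: "(\<Sum>k<\<mu>. (if k = k0 then c else 0) * B k j) = c * B k0 j" .
    show "(vscale c x + y) j = (\<Sum>k<\<mu>. (a k + (if k = k0 then c else 0)) * B k j)"
      using k0 a e1 z by (simp add: vscale_def add.commute)
  qed
qed

lemma hmul_row: "hmul \<mu> B A i = (\<Sum>k<\<mu>. vscale (A i k) (B k))"
  by (rule ext) (simp add: hmul_def sum_fun_apply vscale_def)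

lemma VL_eq:
  fixes B :: "nat \<Rightarrow> nat \<Rightarrow> 'a::field"
  assumes B: "B \<in> mats \<mu> n"
  shows "rank_support m n (row_space \<mu> B) = hmul \<mu> B ` mats m \<mu>"
proof
  show "hmul \<mu> B ` mats m \<mu> \<subseteq> rank_support m n (row_space \<mu> B)"
  proof clarify
    fix A assume A: "A \<in> (mats m \<mu> :: (nat \<Rightarrow> nat \<Rightarrow> 'a) set)"
    have "hmul \<mu> B A \<in> mats m n" using A B by (auto simp: mats_def hmul_def)
    moreover have "row_space m (hmul \<mu> B A) \<subseteq> row_space \<mu> B"
      unfolding row_space_def
    proof (rule VS.span_minimal[OF _ VS.subspace_span], clarify)
      fix i assume "i < m"
      have "hmul \<mu> B A i = (\<Sum>k<\<mu>. vscale (A i k) (B k))" by (rule hmul_row)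
      also have "\<dots> \<in> VS.span {B k | k. k < \<mu>}"
        by (intro VS.span_sum VS.span_scale VS.span_base) auto
      finally show "hmul \<mu> B A i \<in> VS.span {B k | k. k < \<mu>}" .
    qed
    ultimately show "hmul \<mu> B A \<in> rank_support m n (row_space \<mu> B)" by (simp add: rank_support_def)
  qed
next
  show "rank_support m n (row_space \<mu> B) \<subseteq> hmul \<mu> B ` mats m \<mu>"
  proof
    fix V assume V: "V \<in> rank_support m n (row_space \<mu> B)"
    then have Vm: "V \<in> mats m n" and Vr: "row_space m V \<subseteq> row_space \<mu> B"
      by (auto simp: rank_support_def)
    have "\<forall>i. \<exists>a. i < m \<longrightarrow> (\<forall>j. V i j = (\<Sum>k<\<mu>. a k * B k j))"
    proof
      fix i show "\<exists>a. i < m \<longrightarrow> (\<forall>j. V i j = (\<Sum>k<\<mu>. a k * B k j))"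
      proof (cases "i < m")
        case True
        then have "V i \<in> row_space m V" unfolding row_space_def by (intro VS.span_base) auto
        then have "V i \<in> VS.span {B k | k. k < \<mu>}" using Vr by (auto simp: row_space_def)
        then show ?thesis using span_rep by blast
      qed simp
    qed
    then obtain a where a: "\<And>i j. i < m \<Longrightarrow> V i j = (\<Sum>k<\<mu>. a i k * B k j)" by metis
    define A where "A = (\<lambda>i k. if i < m \<and> k < \<mu> then a i k else 0)"
    have "A \<in> mats m \<mu>" by (auto simp: A_def mats_def)
    moreover have "V = hmul \<mu> B A"
    proof (intro ext)
      fix i j show "V i j = hmul \<mu> B A i j"
      proof (cases "i < m")
        case True then show ?thesis by (simp add: a hmul_def A_def)
      next
        case False then show ?thesis using Vm by (simp add: hmul_def A_def mats_def)
      qed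
    qed
    ultimately show "V \<in> hmul \<mu> B ` mats m \<mu>" by blast
  qed
qed

lemma hmul_add: "hmul \<mu> B (A + A') = hmul \<mu> B A + hmul \<mu> B A'"
  by (auto simp: hmul_def fun_eq_iff distrib_right sum.distrib)

lemma mt_add: "mult_transp m n \<mu> (c + d) B = mult_transp m n \<mu> c B + mult_transp m n \<mu> d B"
  by (auto simp: mult_transp_def fun_eq_iff distrib_right sum.distrib)

lemma mt_scale: "mult_transp m n \<mu> (mscale a c) B = mscale a (mult_transp m n \<mu> c B)"
  by (auto simp: mult_transp_def fun_eq_iff mscale_def sum_distrib_left mult.assoc)

lemma mt_mats: "mult_transp m n \<mu> c B \<in> mats m \<mu>"
  by (auto simp: mult_transp_def mats_def)

lemma pairing: "ip m n c (hmul \<mu> B A) = ip m \<mu> (mult_transp m n \<mu> c B) A"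
proof -
  have "ip m n c (hmul \<mu> B A) = (\<Sum>i<m. \<Sum>j<n. \<Sum>k<\<mu>. c i j * B k j * A i k)"
    by (simp add: ip_def hmul_def sum_distrib_left mult_ac)
  also have "\<dots> = (\<Sum>i<m. \<Sum>k<\<mu>. \<Sum>j<n. c i j * B k j * A i k)"
    by (rule sum.cong[OF refl], rule sum.swap)
  also have "\<dots> = ip m \<mu> (mult_transp m n \<mu> c B) A"
    by (simp add: ip_def mult_transp_def sum_distrib_right)
  finally show ?thesis .
qed


lemma mt_zero [simp]: "mult_transp m n \<mu> 0 B = 0"
  by (simp add: mult_transp_def fun_eq_iff)

lemma hmul_zero [simp]: "hmul \<mu> B 0 = 0"
  by (simp add: hmul_def fun_eq_iff)

lemma key_card:
  fixes C :: "(nat \<Rightarrow> nat \<Rightarrow> 'a::{finite,field}) set" and B :: "nat \<Rightarrow> nat \<Rightarrow> 'a"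
  assumes B: "B \<in> mats \<mu> n" and C: "C \<subseteq> mats m n" "MS.subspace C"
  shows "card (dual_code m n C \<inter> rank_support m n (row_space \<mu> B)) * card ((\<lambda>c. mult_transp m n \<mu> c B) ` C)
         = card (rank_support m n (row_space \<mu> B))"
proof -
  let ?f = "\<lambda>c. mult_transp m n \<mu> c B"
  let ?h = "hmul \<mu> B"
  have fC: "?f ` C \<subseteq> mats m \<mu>" using mt_mats by auto
  have fCs: "MS.subspace (?f ` C)"
    unfolding MS.subspace_def
  proof (intro conjI ballI allI)
    show "0 \<in> ?f ` C" using MS.subspace_0[OF C(2)] mt_zero by (metis image_eqI)
  next
    fix x y assume "x \<in> ?f ` C" "y \<in> ?f ` C"
    then obtain c d where "c \<in> C" "d \<in> C" "x = ?f c" "y = ?f d" by auto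
    then show "x + y \<in> ?f ` C" using mt_add[of m n \<mu> c d B] MS.subspace_add[OF C(2)]
      by (metis image_eqI)
  next
    fix a x assume "x \<in> ?f ` C"
    then obtain c where "c \<in> C" "x = ?f c" by auto
    then show "mscale a x \<in> ?f ` C" using mt_scale[of m n \<mu> a c B] MS.subspace_scale[OF C(2)]
      by (metis image_eqI)
  qed
  define G where "G = dual_code m \<mu> (?f ` C)"
  have VL: "rank_support m n (row_space \<mu> B) = ?h ` mats m \<mu>" by (rule VL_eq[OF B])
  have DV: "dual_code m n C \<inter> rank_support m n (row_space \<mu> B) = ?h ` G"
  proof
    show "dual_code m n C \<inter> rank_support m n (row_space \<mu> B) \<subseteq> ?h ` G"
    proof
      fix V assume V: "V \<in> dual_code m n C \<inter> rank_support m n (row_space \<mu> B)"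
      then obtain A where A: "A \<in> mats m \<mu>" "V = ?h A" using VL by auto
      have "\<forall>c\<in>C. ip m n c (?h A) = 0" using V A by (auto simp: dual_code_ip)
      then have "\<forall>M\<in>?f ` C. ip m \<mu> M A = 0" by (auto simp: pairing)
      then have "A \<in> G" using A by (simp add: G_def dual_code_ip)
      then show "V \<in> ?h ` G" using A by simp
    qed
  next
    show "?h ` G \<subseteq> dual_code m n C \<inter> rank_support m n (row_space \<mu> B)"
    proof
      fix V assume "V \<in> ?h ` G"
      then obtain A where A: "A \<in> G" "V = ?h A" by auto
      have Am: "A \<in> mats m \<mu>" using A by (simp add: G_def dual_code_ip)
      then have "V \<in> rank_support m n (row_space \<mu> B)" using VL A by simp
      moreover have "V \<in> mats m n" using calculation by (simp add: rank_support_def)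
      moreover have "\<forall>c\<in>C. ip m n c V = 0" using A by (auto simp: G_def dual_code_ip pairing)
      ultimately show "V \<in> dual_code m n C \<inter> rank_support m n (row_space \<mu> B)"
        by (simp add: dual_code_ip)
    qed
  qed
  define Z where "Z = {A \<in> mats m \<mu>. ?h A = 0}"
  have GZ: "{A \<in> G. ?h A = 0} = Z"
  proof -
    have "A \<in> G" if "A \<in> mats m \<mu>" "?h A = 0" for A
    proof -
      have "\<forall>c\<in>C. ip m \<mu> (?f c) A = 0"
        using that pairing[of m n _ \<mu> B A, symmetric] by (simp add: ip_def)
      then show ?thesis using that by (auto simp: G_def dual_code_ip)
    qed
    then show ?thesis by (auto simp: Z_def G_def dual_code_ip)
  qed
  have GS: "MS.subspace G" unfolding G_def by (rule subspace_dual)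
  have Gm: "G \<subseteq> mats m \<mu>" by (auto simp: G_def dual_code_ip)
  have c1: "card (mats m \<mu> :: (nat \<Rightarrow> nat \<Rightarrow> 'a) set) = card (?h ` mats m \<mu>) * card Z"
    unfolding Z_def
  proof (rule card_image_kernel[where X="mats m \<mu>" and g="?h"])
    show "finite (mats m \<mu> :: (nat \<Rightarrow> nat \<Rightarrow> 'a) set)" by simp
  qed (auto simp: hmul_add mats_def)
  have c2: "card G = card (?h ` G) * card Z"
    unfolding GZ[symmetric]
  proof (rule card_image_kernel[where X="G" and g="?h"])
    show "finite G" using Gm finite_subset finite_mats by blast
  qed (auto simp: hmul_add MS.subspace_diff[OF GS] MS.subspace_add[OF GS])
  have c3: "card G * card (?f ` C) = card (mats m \<mu> :: (nat \<Rightarrow> nat \<Rightarrow> 'a) set)"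
    using dual_card[OF fC fCs] card_mats[where 'a='a, of m \<mu>] by (simp add: G_def)
  have "0 \<in> Z" by (simp add: Z_def MS.subspace_0[OF subspace_mats])
  moreover have "finite Z" unfolding Z_def by simp
  ultimately have Zpos: "card Z > 0" by (auto simp: card_gt_0_iff)
  have "card (?h ` G) * card (?f ` C) * card Z = card (?h ` mats m \<mu>) * card Z"
    using c1 c2 c3 by (simp add: mult_ac)
  then have "card (?h ` G) * card (?f ` C) = card (?h ` mats m \<mu>)" using Zpos by simp
  then show ?thesis using DV VL by simp
qed


lemma info_formula:
  fixes C1 C2 W :: "(nat \<Rightarrow> nat \<Rightarrow> 'a::{finite,field}) set" and \<psi> :: "'v \<Rightarrow> (nat \<Rightarrow> nat \<Rightarrow> 'a)"
    and f :: "(nat \<Rightarrow> nat \<Rightarrow> 'a) \<Rightarrow> 'y::ab_group_add" and V :: "'v set"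
  assumes V: "finite V" "V \<noteq> {}" and C2: "finite C2" "MS.subspace C2"
    and W: "MS.subspace W" "W \<inter> C2 = {0}"
    and C1: "C1 = {D + w | D w. D \<in> C2 \<and> w \<in> W}" and psi: "bij_betw \<psi> V W"
    and f: "\<And>x y. f (x + y) = f x + f y"
  shows "mutual_info b (pmf_of_set (V \<times> C2)) fst (\<lambda>(x, D). f (\<psi> x + D))
         = log b (card (f ` C1) / card (f ` C2))"
proof -
  define A where "A = V \<times> C2"
  have Ane: "A \<noteq> {}" using V(2) MS.subspace_0[OF C2(2)] by (auto simp: A_def)
  have Afin: "finite A" using V(1) C2(1) by (simp add: A_def)
  define Y where "Y = (\<lambda>(x, D). f (\<psi> x + D))"
  define \<Phi> where "\<Phi> = (\<lambda>(x::'v, D::nat \<Rightarrow> nat \<Rightarrow> 'a). \<psi> x + D)"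
  have f0: "f 0 = 0" using f[of 0 0] by simp
  have fd: "f (x - z) = f x - f z" for x z using f[of "x - z" z] by (simp add: algebra_simps)
  have psiW: "\<psi> ` V = W" and psiinj: "inj_on \<psi> V" using psi by (auto simp: bij_betw_def)
  have PhiA: "\<Phi> ` A = C1"
  proof
    show "\<Phi> ` A \<subseteq> C1"
    proof clarify
      fix x D assume "(x, D) \<in> A"
      then have "x \<in> V" "D \<in> C2" by (auto simp: A_def)
      then have "\<psi> x \<in> W" using psiW by blast
      then show "\<Phi> (x, D) \<in> C1" unfolding C1 \<Phi>_def using \<open>D \<in> C2\<close>
        by (intro CollectI exI[of _ D] exI[of _ "\<psi> x"]) (simp add: add.commute)
    qed
    show "C1 \<subseteq> \<Phi> ` A"
    proof
      fix c assume "c \<in> C1"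
      then obtain D w where Dw: "D \<in> C2" "w \<in> W" "c = D + w" by (auto simp: C1)
      then obtain x where "x \<in> V" "w = \<psi> x" using psiW by auto
      then have "c = \<Phi> (x, D)" "(x, D) \<in> A" using Dw by (simp_all add: \<Phi>_def A_def add.commute)
      then show "c \<in> \<Phi> ` A" by blast
    qed
  qed
  have Phiinj: "inj_on \<Phi> A"
  proof (rule inj_onI, clarify)
    fix x D x' D' assume xD: "(x, D) \<in> A" "(x', D') \<in> A" and eq: "\<Phi> (x, D) = \<Phi> (x', D')"
    then have "\<psi> x - \<psi> x' = D' - D" by (simp add: \<Phi>_def algebra_simps)
    moreover have "\<psi> x - \<psi> x' \<in> W" using xD psiW MS.subspace_diff[OF W(1)] by (auto simp: A_def)
    moreover have "D' - D \<in> C2" using xD MS.subspace_diff[OF C2(2)] by (auto simp: A_def)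
    ultimately have "\<psi> x - \<psi> x' \<in> W \<inter> C2" by simp
    then have "\<psi> x - \<psi> x' = 0" using W(2) by blast
    then have "\<psi> x = \<psi> x'" by simp
    moreover have "x \<in> V" "x' \<in> V" using xD by (auto simp: A_def)
    ultimately have "x = x'" using psiinj by (simp add: inj_on_def)
    then show "x = x' \<and> D = D'" using eq by (simp add: \<Phi>_def)
  qed
  have YA: "Y ` A = f ` C1" unfolding PhiA[symmetric] image_image by (simp add: Y_def \<Phi>_def case_prod_unfold)
  have XA: "fst ` A = V" using MS.subspace_0[OF C2(2)] by (force simp: A_def)
  have cardA: "card A = card V * card C2" by (simp add: A_def card_cartesian_product)
  have cardC1: "card C1 = card A" using card_image[OF Phiinj] PhiA by simp
  have C1fin: "finite C1" using PhiA Afin by blast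
  have C1add: "x + y \<in> C1" if xy: "x \<in> C1" "y \<in> C1" for x y
  proof -
    obtain D w D' w' where "D \<in> C2" "w \<in> W" "x = D + w" "D' \<in> C2" "w' \<in> W" "y = D' + w'"
      using xy unfolding C1 by blast
    then show ?thesis unfolding C1
      by (intro CollectI exI[of _ "D + D'"] exI[of _ "w + w'"])
         (auto simp: MS.subspace_add[OF C2(2)] MS.subspace_add[OF W(1)] algebra_simps)
  qed
  have C1diff: "x - y \<in> C1" if xy: "x \<in> C1" "y \<in> C1" for x y
  proof -
    obtain D w D' w' where "D \<in> C2" "w \<in> W" "x = D + w" "D' \<in> C2" "w' \<in> W" "y = D' + w'"
      using xy unfolding C1 by blast
    then show ?thesis unfolding C1
      by (intro CollectI exI[of _ "D - D'"] exI[of _ "w - w'"])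
         (auto simp: MS.subspace_diff[OF C2(2)] MS.subspace_diff[OF W(1)] algebra_simps)
  qed
  have C10: "0 \<in> C1" unfolding C1 using MS.subspace_0[OF C2(2)] MS.subspace_0[OF W(1)]
    by (intro CollectI exI[of _ 0]) simp
  define K1 where "K1 = card {c\<in>C1. f c = 0}"
  define K2 where "K2 = card {D\<in>C2. f D = 0}"
  have h1: "card C1 = card (f ` C1) * K1" unfolding K1_def
    by (rule card_image_kernel[OF C1fin f C1diff C1add])
  have h2: "card C2 = card (f ` C2) * K2" unfolding K2_def
    by (rule card_image_kernel[where X=C2 and g=f]) (use C2(1) f in \<open>auto simp: MS.subspace_diff[OF C2(2)] MS.subspace_add[OF C2(2)]\<close>)
  have K1pos: "K1 > 0" unfolding K1_def using C1fin C10 f0 by (auto simp: card_gt_0_iff)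
  have K2pos: "K2 > 0" unfolding K2_def using C2(1) MS.subspace_0[OF C2(2)] f0 by (auto simp: card_gt_0_iff)
  have C2pos: "card C2 > 0" using C2(1) MS.subspace_0[OF C2(2)] by (auto simp: card_gt_0_iff)
  have Apos: "card A > 0" using Afin Ane by (auto simp: card_gt_0_iff)
  have fC1pos: "card (f ` C1) > 0" using h1 K1pos cardC1 Apos by (metis mult_0 neq0_conv)
  have fC2pos: "card (f ` C2) > 0" using h2 C2pos by (metis mult_0 neq0_conv)
  define N where "N = (\<lambda>x y. card (A \<inter> {w. fst w = x \<and> Y w = y}))"
  define R where "R = real (card (f ` C1)) / real (card (f ` C2))"
  have Nxy: "N x y = 0 \<or> N x y = K2" if "x \<in> V" for x y
  proof -
    have "A \<inter> {w. fst w = x \<and> Y w = y} = (\<lambda>D. (x, D)) ` {D\<in>C2. f (\<psi> x + D) = y}"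
      using that by (auto simp: A_def Y_def)
    then have e: "N x y = card {D\<in>C2. f (\<psi> x + D) = y}"
      unfolding N_def by (simp add: card_image inj_on_def)
    show ?thesis
    proof (cases "\<exists>D0\<in>C2. f (\<psi> x + D0) = y")
      case True
      then obtain D0 where "D0 \<in> C2" "f (\<psi> x + D0) = y" by blast
      have "card {D\<in>C2. f (\<psi> x + D) = y} = K2" unfolding K2_def
        by (rule coset_card[where g=f and X=C2]) (use f \<open>D0 \<in> C2\<close> \<open>f (\<psi> x + D0) = y\<close> in \<open>auto simp: MS.subspace_diff[OF C2(2)] MS.subspace_add[OF C2(2)]\<close>)
      then show ?thesis using e by simp
    next
      case False
      then have emp: "{D\<in>C2. f (\<psi> x + D) = y} = {}" by auto
      have "card {D\<in>C2. f (\<psi> x + D) = y} = 0" by (subst emp) simp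
      then show ?thesis using e by simp
    qed
  qed
  have Nx: "card (A \<inter> {w. fst w = x}) = card C2" if "x \<in> V" for x
  proof -
    have "A \<inter> {w. fst w = x} = (\<lambda>D. (x, D)) ` C2" using that by (auto simp: A_def)
    then show ?thesis by (simp add: card_image inj_on_def)
  qed
  have Ny: "card (A \<inter> {w. Y w = y}) = K1" if yC: "y \<in> f ` C1" for y
  proof -
    have e1: "A \<inter> {w. Y w = y} = {w\<in>A. f (\<Phi> w) = y}" by (auto simp: Y_def \<Phi>_def)
    have e2: "\<Phi> ` {w\<in>A. f (\<Phi> w) = y} = {c\<in>C1. f c = y}" using PhiA by auto
    have e3: "inj_on \<Phi> {w\<in>A. f (\<Phi> w) = y}" using Phiinj by (rule inj_on_subset) auto
    have "card (A \<inter> {w. Y w = y}) = card {w\<in>A. f (\<Phi> w) = y}" by (simp only: e1)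
    also have "\<dots> = card (\<Phi> ` {w\<in>A. f (\<Phi> w) = y})" by (rule card_image[OF e3, symmetric])
    also have "\<dots> = card {c\<in>C1. f c = y}" by (simp only: e2)
    finally have e: "card (A \<inter> {w. Y w = y}) = card {c\<in>C1. f c = y}" .
    obtain c0 where "c0 \<in> C1" "f (0 + c0) = y" using yC by auto
    have "card {c\<in>C1. f (0 + c) = y} = K1" unfolding K1_def
      by (rule coset_card[where g=f and X=C1]) (use f C1diff C1add \<open>c0 \<in> C1\<close> \<open>f (0 + c0) = y\<close> in auto)
    then show ?thesis using e by simp
  qed
  let ?P = "pmf_of_set A"
  have prob: "measure_pmf.prob ?P E = card (A \<inter> E) / card A" for E
    by (rule measure_pmf_of_set[OF Ane Afin])
  have tm: "(let pxy = measure_pmf.prob ?P {w. fst w = x \<and> Y w = y};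
                   px = measure_pmf.prob ?P {w. fst w = x};
                   py = measure_pmf.prob ?P {w. Y w = y}
               in if pxy = 0 then 0 else pxy * log b (pxy / (px * py)))
            = real (N x y) / card A * log b R" if x: "x \<in> V" and y: "y \<in> f ` C1" for x y
  proof (cases "N x y = 0")
    case True then show ?thesis by (simp add: Let_def prob N_def)
  next
    case False
    then have NK: "N x y = K2" using Nxy[OF x, of y] by (metis)
    have ratio: "(real K2 / card A) / ((real (card C2) / card A) * (real K1 / card A)) = R"
    proof -
      have "real (card A) = real (card (f ` C1)) * K1" using h1 cardC1 by simp
      moreover have "real (card C2) = real (card (f ` C2)) * K2" using h2 by simp
      ultimately show ?thesis using K1pos K2pos fC1pos fC2pos Apos C2pos
        by (simp add: R_def field_simps)
    qed
    have Nd: "card (A \<inter> {w. fst w = x \<and> Y w = y}) = K2" using NK by (simp add: N_def)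
    show ?thesis using NK ratio Nx[OF x] Ny[OF y] Apos K2pos
      by (simp add: Let_def prob Nd)
  qed
  have sumN: "(\<Sum>x\<in>V. \<Sum>y\<in>f ` C1. N x y) = card A"
  proof -
    have "(\<Sum>y\<in>f ` C1. N x y) = card {w\<in>A. fst w = x}" if "x \<in> V" for x
    proof -
      have "(\<Sum>y\<in>f ` C1. N x y) = (\<Sum>y\<in>f ` C1. \<Sum>w\<in>{w. w \<in> {w\<in>A. fst w = x} \<and> Y w = y}. 1)"
        unfolding N_def by (intro sum.cong refl) (simp add: Int_def conj_commute conj_left_commute)
      also have "\<dots> = (\<Sum>w\<in>{w\<in>A. fst w = x}. 1)"
        by (rule sum.group) (use Afin YA C1fin in auto)
      finally show ?thesis by simp
    qed
    then have "(\<Sum>x\<in>V. \<Sum>y\<in>f ` C1. N x y) = (\<Sum>x\<in>V. \<Sum>w\<in>{w. w \<in> A \<and> fst w = x}. 1)"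
      by simp
    also have "\<dots> = (\<Sum>w\<in>A. 1)"
      by (rule sum.group) (use Afin XA V in auto)
    finally show ?thesis by simp
  qed
  have "mutual_info b ?P fst Y = (\<Sum>x\<in>V. \<Sum>y\<in>f ` C1. real (N x y) / card A * log b R)"
    unfolding mutual_info_def set_pmf_of_set[OF Ane Afin] XA YA
    by (intro sum.cong refl tm) auto
  also have "\<dots> = (\<Sum>x\<in>V. \<Sum>y\<in>f ` C1. real (N x y)) / card A * log b R"
    by (simp add: sum_divide_distrib sum_distrib_right)
  also have "\<dots> = log b R"
    using sumN Apos by (simp flip: of_nat_sum)
  finally show ?thesis by (simp add: A_def Y_def R_def)
qed


lemma card_field_ge2: "CARD('a::{finite,field}) \<ge> 2"
proof -
  have "card {0::'a, 1} \<le> CARD('a)" by (rule card_mono) auto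
  then show ?thesis by simp
qed

lemma subspace_rank_support:
  fixes L :: "(nat \<Rightarrow> 'a::field) set"
  assumes L: "VS.subspace L"
  shows "MS.subspace (rank_support m n L)"
  unfolding MS.subspace_def rank_support_def
proof (intro conjI ballI allI)
  show "0 \<in> {V \<in> mats m n. row_space m V \<subseteq> L}"
    using VS.span_minimal[OF _ L, of "{(0::nat \<Rightarrow> nat \<Rightarrow> 'a) i | i. i < m}"] VS.subspace_0[OF L]
    by (auto simp: mats_def row_space_def)
next
  fix x y assume x: "x \<in> {V \<in> mats m n. row_space m V \<subseteq> L}" and y: "y \<in> {V \<in> mats m n. row_space m V \<subseteq> L}"
  have "(x + y) i \<in> L" if "i < m" for i
  proof -
    have "x i \<in> L" "y i \<in> L" using x y that VS.span_base[of _ "{x i | i. i < m}"] VS.span_base[of _ "{y i | i. i < m}"]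
      by (auto simp: row_space_def)
    then show ?thesis using VS.subspace_add[OF L] by (simp add: plus_fun_def)
  qed
  then have "row_space m (x + y) \<subseteq> L" unfolding row_space_def
    by (intro VS.span_minimal[OF _ L]) auto
  then show "x + y \<in> {V \<in> mats m n. row_space m V \<subseteq> L}" using x y by (auto simp: mats_def)
next
  fix c x assume x: "x \<in> {V \<in> mats m n. row_space m V \<subseteq> L}"
  have "(mscale c x) i \<in> L" if "i < m" for i
  proof -
    have "x i \<in> L" using x that VS.span_base[of _ "{x i | i. i < m}"] by (auto simp: row_space_def)
    then have "vscale c (x i) \<in> L" using VS.subspace_scale[OF L] by blast
    then show ?thesis by (simp add: vscale_def mscale_def)
  qed
  then have "row_space m (mscale c x) \<subseteq> L" unfolding row_space_def
    by (intro VS.span_minimal[OF _ L]) auto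
  then show "mscale c x \<in> {V \<in> mats m n. row_space m V \<subseteq> L}" using x by (auto simp: mats_def mscale_def)
qed

lemma row_space_sub: "B \<in> mats \<mu> n \<Longrightarrow> row_space \<mu> B \<subseteq> vecs n"
  unfolding row_space_def
  by (intro VS.span_minimal[OF _ subspace_vecs]) (auto simp: mats_def vecs_def)

lemma leak_dims:
  fixes C1 C2 W :: "(nat \<Rightarrow> nat \<Rightarrow> 'a::{finite,field}) set"
    and \<psi> :: "(nat \<Rightarrow> 'a) \<Rightarrow> (nat \<Rightarrow> nat \<Rightarrow> 'a)"
  assumes C1: "lin_code m n C1" and C2: "lin_code m n C2"
    and W: "msubspace W" "W \<inter> C2 = {0}" and C1eq: "C1 = {D + V | D V. D \<in> C2 \<and> V \<in> W}"
    and psi: "bij_betw \<psi> (vecs l) W" and B: "B \<in> mats \<mu> n"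
  shows "leak_info m n l C2 \<psi> \<mu> B =
     real (mdim (dual_code m n C2 \<inter> rank_support m n (row_space \<mu> B)))
   - real (mdim (dual_code m n C1 \<inter> rank_support m n (row_space \<mu> B)))"
proof -
  let ?f = "\<lambda>c. mult_transp m n \<mu> c B"
  let ?VL = "rank_support m n (row_space \<mu> B)"
  let ?q = "CARD('a)"
  have C2s: "C2 \<subseteq> mats m n" "MS.subspace C2" using C2 by (auto simp: lin_code_def)
  have C1s: "C1 \<subseteq> mats m n" "MS.subspace C1" using C1 by (auto simp: lin_code_def)
  have C2fin: "finite C2" using C2s(1) finite_subset finite_mats by blast
  have "0 \<in> (vecs l :: (nat \<Rightarrow> 'a) set)" by (simp add: vecs_def)
  then have Vne: "vecs l \<noteq> ({} :: (nat \<Rightarrow> 'a) set)" by blast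
  have info: "leak_info m n l C2 \<psi> \<mu> B = log ?q (card (?f ` C1) / card (?f ` C2))"
    unfolding leak_info_def
    by (rule info_formula[OF finite_vecs Vne C2fin C2s(2) W C1eq psi]) (rule mt_add)
  have VLs: "MS.subspace ?VL"
    by (rule subspace_rank_support) (unfold row_space_def, rule VS.subspace_span)
  have VLfin: "finite ?VL" by (rule finite_subset[of _ "mats m n"]) (auto simp: rank_support_def)
  have VLpos: "card ?VL > 0" using VLfin MS.subspace_0[OF VLs] by (auto simp: card_gt_0_iff)
  define d1 where "d1 = mdim (dual_code m n C1 \<inter> ?VL)"
  define d2 where "d2 = mdim (dual_code m n C2 \<inter> ?VL)"
  have cd1: "card (dual_code m n C1 \<inter> ?VL) = ?q ^ d1" unfolding d1_def
    by (rule card_subspace_ms[OF MS.subspace_inter[OF subspace_dual VLs]]) (use VLfin in auto)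
  have cd2: "card (dual_code m n C2 \<inter> ?VL) = ?q ^ d2" unfolding d2_def
    by (rule card_subspace_ms[OF MS.subspace_inter[OF subspace_dual VLs]]) (use VLfin in auto)
  have k1: "?q ^ d1 * card (?f ` C1) = card ?VL" using key_card[OF B C1s] cd1 by simp
  have k2: "?q ^ d2 * card (?f ` C2) = card ?VL" using key_card[OF B C2s] cd2 by simp
  have qpos: "real ?q > 1" using card_field_ge2[where 'a='a] by simp
  have "real (card (?f ` C1)) / real (card (?f ` C2)) = real ?q ^ d2 / real ?q ^ d1"
  proof -
    have "real ?q ^ d1 * real (card (?f ` C1)) = real (card ?VL)" using k1 by (metis of_nat_mult of_nat_power)
    moreover have "real ?q ^ d2 * real (card (?f ` C2)) = real (card ?VL)" using k2 by (metis of_nat_mult of_nat_power)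
    ultimately have a: "real (card (?f ` C1)) = real (card ?VL) / real ?q ^ d1"
      and b: "real (card (?f ` C2)) = real (card ?VL) / real ?q ^ d2"
      using qpos by (simp_all add: eq_divide_eq mult.commute)
    show ?thesis unfolding a b using VLpos qpos by (simp add: divide_simps)
  qed
  then have "leak_info m n l C2 \<psi> \<mu> B = log ?q (real ?q ^ d2) - log ?q (real ?q ^ d1)"
    using info qpos by (simp add: log_divide)
  also have "\<dots> = real d2 - real d1" using qpos by (simp add: log_nat_power)
  finally show ?thesis by (simp add: d1_def d2_def)
qed


lemma row_space_props:
  fixes B :: "nat \<Rightarrow> nat \<Rightarrow> 'a::field"
  assumes "B \<in> mats \<mu> n"
  shows "row_space \<mu> B \<subseteq> vecs n" "VS.subspace (row_space \<mu> B)" "vdim (row_space \<mu> B) \<le> \<mu>"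
proof -
  show "row_space \<mu> B \<subseteq> vecs n" by (rule row_space_sub[OF assms])
  show "VS.subspace (row_space \<mu> B)" unfolding row_space_def by (rule VS.subspace_span)
  have e: "{B i | i. i < \<mu>} = B ` {..<\<mu>}" by auto
  have "vdim (row_space \<mu> B) \<le> card {B i | i. i < \<mu>}"
    unfolding row_space_def by (rule VS.dim_le_card) (auto simp: e)
  also have "\<dots> \<le> \<mu>" unfolding e using card_image_le[of "{..<\<mu>}" B] by simp
  finally show "vdim (row_space \<mu> B) \<le> \<mu>" .
qed

lemma span_by_matrix:
  fixes L :: "(nat \<Rightarrow> 'a::{finite,field}) set"
  assumes L: "L \<subseteq> vecs n" "VS.subspace L" "vdim L \<le> \<mu>"
  shows "\<exists>B \<in> mats \<mu> n. row_space \<mu> B = L"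
proof -
  obtain Bs where Bs: "Bs \<subseteq> L" "VS.independent Bs" "L \<subseteq> VS.span Bs" "card Bs = vdim L"
    by (rule VS.basis_exists)
  have fL: "finite L" using L(1) finite_subset finite_vecs by blast
  have fB: "finite Bs" using Bs(1) fL finite_subset by auto
  obtain h where h: "bij_betw h {0..<card Bs} Bs" using ex_bij_betw_nat_finite[OF fB] by blast
  define B where "B = (\<lambda>i. if i < card Bs then h i else 0)"
  have hB: "h i \<in> Bs" if "i < card Bs" for i using h that by (auto simp: bij_betw_def)
  have "B \<in> mats \<mu> n"
  proof -
    have "B i j = 0" if "\<mu> \<le> i \<or> n \<le> j" for i j
    proof (cases "i < card Bs")
      case True
      then have "i < \<mu>" using L(3) Bs(4) by simp
      then have "n \<le> j" using that by simp
      moreover have "h i \<in> vecs n" using hB[OF True] Bs(1) L(1) by auto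
      ultimately show ?thesis using True by (simp add: B_def vecs_def)
    qed (simp add: B_def)
    then show ?thesis by (auto simp: mats_def)
  qed
  moreover have "row_space \<mu> B = L"
  proof -
    have s1: "{B i | i. i < \<mu>} \<subseteq> insert 0 Bs" using hB by (auto simp: B_def)
    have s2: "Bs \<subseteq> {B i | i. i < \<mu>}"
    proof
      fix v assume "v \<in> Bs"
      then have "v \<in> h ` {0..<card Bs}" using h by (simp add: bij_betw_def)
      then obtain i where "i < card Bs" "v = h i" by auto
      then show "v \<in> {B i | i. i < \<mu>}" using L(3) Bs(4) by (auto simp: B_def intro!: exI[of _ i])
    qed
    have "VS.span {B i | i. i < \<mu>} = VS.span Bs"
    proof
      show "VS.span {B i | i. i < \<mu>} \<subseteq> VS.span Bs"
        using VS.span_mono[OF s1] by simp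
      show "VS.span Bs \<subseteq> VS.span {B i | i. i < \<mu>}" using VS.span_mono[OF s2] .
    qed
    also have "\<dots> = L" using VS.span_subspace[OF Bs(1) Bs(3) L(2)] .
    finally show ?thesis by (simp add: row_space_def)
  qed
  ultimately show ?thesis by blast
qed

lemma vdim_mono:
  fixes L1 L2 :: "(nat \<Rightarrow> 'a::{finite,field}) set"
  assumes "VS.subspace L1" "VS.subspace L2" "L1 \<subseteq> L2" "finite L2"
  shows "vdim L1 \<le> vdim L2"
proof -
  have "card L1 \<le> card L2" by (rule card_mono[OF assms(4,3)])
  moreover have "card L1 = CARD('a) ^ vdim L1"
    by (rule card_subspace_vs[OF assms(1)]) (use assms(3,4) finite_subset in blast)
  moreover have "card L2 = CARD('a) ^ vdim L2" by (rule card_subspace_vs[OF assms(2,4)])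
  ultimately have "CARD('a) ^ vdim L1 \<le> CARD('a) ^ vdim L2" by simp
  moreover have q: "1 < CARD('a)" using card_field_ge2[where 'a='a] by simp
  ultimately show ?thesis using power_le_imp_le_exp[OF q] by blast
qed

lemma mdim_lt_iff:
  fixes X Y :: "(nat \<Rightarrow> nat \<Rightarrow> 'a::{finite,field}) set"
  assumes "MS.subspace X" "MS.subspace Y" "Y \<subseteq> X" "finite X"
  shows "mdim Y \<le> mdim X" "mdim Y < mdim X \<longleftrightarrow> (\<exists>C\<in>X. C \<notin> Y)"
proof -
  have fY: "finite Y" using assms(3,4) finite_subset by auto
  have cX: "card X = CARD('a) ^ mdim X" by (rule card_subspace_ms[OF assms(1,4)])
  have cY: "card Y = CARD('a) ^ mdim Y" by (rule card_subspace_ms[OF assms(2) fY])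
  have q: "1 < CARD('a)" using card_field_ge2[where 'a='a] by simp
  have le: "card Y \<le> card X" by (rule card_mono[OF assms(4,3)])
  have i1: "mdim Y \<le> mdim X \<longleftrightarrow> card Y \<le> card X" unfolding cX cY
    using q by (rule power_increasing_iff[symmetric])
  have i2: "mdim Y < mdim X \<longleftrightarrow> card Y < card X" unfolding cX cY
    using q by (rule power_strict_increasing_iff[symmetric])
  show "mdim Y \<le> mdim X" using i1 le by simp
  have i3: "card Y < card X \<longleftrightarrow> Y \<noteq> X"
  proof
    assume "card Y < card X" then show "Y \<noteq> X" by auto
  next
    assume "Y \<noteq> X"
    then have "Y \<subset> X" using assms(3) by (rule psubsetI[rotated])
    then show "card Y < card X" by (rule psubset_card_mono[OF assms(4)])
  qed
  have i4: "Y \<noteq> X \<longleftrightarrow> (\<exists>C\<in>X. C \<notin> Y)" using assms(3) by blast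
  show "mdim Y < mdim X \<longleftrightarrow> (\<exists>C\<in>X. C \<notin> Y)" using i2 i3 i4 by simp
qed

lemma mt_identity:
  fixes c :: "nat \<Rightarrow> nat \<Rightarrow> 'a::field"
  assumes "c \<in> mats m n"
  shows "mult_transp m n n c (\<lambda>i j. if i = j \<and> i < n then 1 else 0) = c"
proof (intro ext)
  fix i k
  show "mult_transp m n n c (\<lambda>i j. if i = j \<and> i < n then 1 else 0) i k = c i k"
  proof (cases "i < m \<and> k < n")
    case True
    have "(\<Sum>j<n. c i j * (if k = j \<and> k < n then 1 else 0)) = (\<Sum>j<n. if j = k then c i j else 0)"
      by (intro sum.cong refl) auto
    also have "\<dots> = c i k" using True by (simp add: sum.delta')
    finally show ?thesis using True by (simp add: mult_transp_def)
  next
    case False then show ?thesis using assms by (auto simp: mult_transp_def mats_def not_less)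
  qed
qed

lemma leak_identity:
  fixes C1 C2 W :: "(nat \<Rightarrow> nat \<Rightarrow> 'a::{finite,field}) set"
    and \<psi> :: "(nat \<Rightarrow> 'a) \<Rightarrow> (nat \<Rightarrow> nat \<Rightarrow> 'a)"
  assumes C1: "lin_code m n C1" and C2: "lin_code m n C2"
    and W: "msubspace W" "W \<inter> C2 = {0}" and C1eq: "C1 = {D + V | D V. D \<in> C2 \<and> V \<in> W}"
    and psi: "bij_betw \<psi> (vecs l) W"
  shows "leak_info m n l C2 \<psi> n (\<lambda>i j. if i = j \<and> i < n then 1 else 0) = real (mdim C1) - real (mdim C2)"
proof -
  let ?I = "\<lambda>i j. if i = j \<and> i < n then (1::'a) else 0"
  let ?f = "\<lambda>c. mult_transp m n n c ?I"
  let ?q = "CARD('a)"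
  have C2s: "C2 \<subseteq> mats m n" "MS.subspace C2" using C2 by (auto simp: lin_code_def)
  have C1s: "C1 \<subseteq> mats m n" "MS.subspace C1" using C1 by (auto simp: lin_code_def)
  have C2fin: "finite C2" using C2s(1) finite_subset finite_mats by blast
  have C1fin: "finite C1" using C1s(1) finite_subset finite_mats by blast
  have "0 \<in> (vecs l :: (nat \<Rightarrow> 'a) set)" by (simp add: vecs_def)
  then have Vne: "vecs l \<noteq> ({} :: (nat \<Rightarrow> 'a) set)" by blast
  have info: "leak_info m n l C2 \<psi> n ?I = log ?q (card (?f ` C1) / card (?f ` C2))"
    unfolding leak_info_def
    by (rule info_formula[OF finite_vecs Vne C2fin C2s(2) W C1eq psi]) (rule mt_add)
  have "?f ` C1 = C1"
  proof -
    have "?f ` C1 = (\<lambda>c. c) ` C1" using C1s(1) mt_identity by (intro image_cong) auto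
    then show ?thesis by simp
  qed
  moreover have "?f ` C2 = C2"
  proof -
    have "?f ` C2 = (\<lambda>c. c) ` C2" using C2s(1) mt_identity by (intro image_cong) auto
    then show ?thesis by simp
  qed
  ultimately have "leak_info m n l C2 \<psi> n ?I = log ?q (real (?q ^ mdim C1) / real (?q ^ mdim C2))"
    using info card_subspace_ms[OF C1s(2) C1fin] card_subspace_ms[OF C2s(2) C2fin] by simp
  also have "\<dots> = real (mdim C1) - real (mdim C2)"
    using card_field_ge2[where 'a='a] by (simp add: log_divide log_nat_power)
  finally show ?thesis .
qed


theorem theorem1:
  fixes C1 C2 W :: "(nat \<Rightarrow> nat \<Rightarrow> 'a::{finite,field}) set"
    and \<psi> :: "(nat \<Rightarrow> 'a) \<Rightarrow> (nat \<Rightarrow> nat \<Rightarrow> 'a)"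
    and m n l :: nat
  assumes "0 < m" and "0 < n"
    and "lin_code m n C1" and "lin_code m n C2" and "C2 \<subset> C1"
    and "l = mdim C1 - mdim C2"
    and "msubspace W" and "W \<inter> C2 = {0}" and "C1 = {D + V | D V. D \<in> C2 \<and> V \<in> W}"
    and "\<And>c x y. x \<in> vecs l \<Longrightarrow> y \<in> vecs l \<Longrightarrow> \<psi> (vscale c x + y) = mscale c (\<psi> x) + \<psi> y"
    and "bij_betw \<psi> (vecs l) W"
  shows "(\<forall>r. 1 \<le> r \<and> r \<le> l \<longrightarrow>
            rgmw m n r (dual_code m n C2) (dual_code m n C1) =
            (LEAST \<mu>. \<exists>B \<in> mats \<mu> n. leak_info m n l C2 \<psi> \<mu> B \<ge> real r))
      \<and> (\<forall>\<mu>. \<mu> \<le> n \<longrightarrow>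
            real_of_int (rdrsp m n \<mu> (dual_code m n C2) (dual_code m n C1)) =
            Max {leak_info m n l C2 \<psi> \<mu>' B | \<mu>' B. \<mu>' \<le> \<mu> \<and> B \<in> mats \<mu>' n})
      \<and> int (rel_rank_dist m (dual_code m n C2) (dual_code m n C1)) - 1 =
            int (GREATEST \<mu>. \<forall>B \<in> mats \<mu> n. leak_info m n l C2 \<psi> \<mu> B = 0)"
proof -
  note C1 = assms(3) and C2 = assms(4) and sub = assms(5) and ldef = assms(6)
    and W = assms(7,8) and C1eq = assms(9) and psi = assms(11)
  have C2s: "C2 \<subseteq> mats m n" "MS.subspace C2" using C2 by (auto simp: lin_code_def)
  have C1s: "C1 \<subseteq> mats m n" "MS.subspace C1" using C1 by (auto simp: lin_code_def)
  define D1 where "D1 = dual_code m n C2"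
  define D2 where "D2 = dual_code m n C1"
  have D21: "D2 \<subseteq> D1" using sub by (auto simp: D1_def D2_def dual_code_def)
  have D1m: "D1 \<subseteq> mats m n" by (auto simp: D1_def dual_code_def)
  define dif where "dif = (\<lambda>L. int (mdim (D1 \<inter> rank_support m n L)) - int (mdim (D2 \<inter> rank_support m n L)))"
  have LK: "leak_info m n l C2 \<psi> \<mu> B = real_of_int (dif (row_space \<mu> B))" if "B \<in> mats \<mu> n" for \<mu> B
    using leak_dims[OF C1 C2 W C1eq psi that] by (simp add: dif_def D1_def D2_def)
  have difp: "0 \<le> dif L \<and> (0 < dif L \<longleftrightarrow> (\<exists>C \<in> D1 \<inter> rank_support m n L. C \<notin> D2))"
    if L: "VS.subspace L" for L
  proof -
    let ?V = "rank_support m n L"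
    have X: "MS.subspace (D1 \<inter> ?V)" unfolding D1_def
      by (rule MS.subspace_inter[OF subspace_dual subspace_rank_support[OF L]])
    have Y: "MS.subspace (D2 \<inter> ?V)" unfolding D2_def
      by (rule MS.subspace_inter[OF subspace_dual subspace_rank_support[OF L]])
    have YX: "D2 \<inter> ?V \<subseteq> D1 \<inter> ?V" using D21 by auto
    have fX: "finite (D1 \<inter> ?V)" using D1m finite_subset finite_mats by blast
    note M = mdim_lt_iff[OF X Y YX fX]
    have "(\<exists>C\<in>D1 \<inter> ?V. C \<notin> D2 \<inter> ?V) \<longleftrightarrow> (\<exists>C \<in> D1 \<inter> ?V. C \<notin> D2)" by blast
    then show ?thesis using M by (auto simp: dif_def)
  qed
  define Id where "Id = (\<lambda>i j. if i = j \<and> i < n then (1::'a) else 0)"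
  have Idm: "Id \<in> mats n n" by (auto simp: Id_def mats_def)
  have dC: "mdim C2 < mdim C1"
  proof -
    have fC1: "finite C1" using C1s(1) finite_subset finite_mats by blast
    have "\<exists>C\<in>C1. C \<notin> C2" using sub by blast
    then show ?thesis using mdim_lt_iff(2)[OF C1s(2) C2s(2) _ fC1] sub by blast
  qed
  have lpos: "1 \<le> l" using dC ldef by simp
  have LId: "leak_info m n l C2 \<psi> n Id = real l"
    using leak_identity[OF C1 C2 W C1eq psi] dC ldef by (simp add: Id_def of_nat_diff)
  have RS: "row_space \<mu> B \<subseteq> vecs n \<and> VS.subspace (row_space \<mu> B) \<and> vdim (row_space \<mu> B) \<le> \<mu>"
    if "B \<in> mats \<mu> n" for \<mu> B using row_space_props[OF that] by blast
  have SP: "\<exists>B \<in> mats \<mu> n. row_space \<mu> B = L"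
    if "L \<subseteq> vecs n" "VS.subspace L" "vdim L \<le> \<mu>" for L :: "(nat \<Rightarrow> 'a) set" and \<mu>
    using span_by_matrix[OF that] .

  have P1: "\<forall>r. 1 \<le> r \<and> r \<le> l \<longrightarrow>
            rgmw m n r D1 D2 = (LEAST \<mu>. \<exists>B \<in> mats \<mu> n. leak_info m n l C2 \<psi> \<mu> B \<ge> real r)"
  proof (intro allI impI)
    fix r assume r: "1 \<le> r \<and> r \<le> l"
    define QL where "QL = (\<lambda>k. \<exists>L. L \<subseteq> vecs n \<and> vsubspace L \<and> vdim L = k \<and>
      int (mdim (D1 \<inter> rank_support m n L)) - int (mdim (D2 \<inter> rank_support m n L)) \<ge> int r)"
    define QB where "QB = (\<lambda>\<mu>. \<exists>B \<in> mats \<mu> n. leak_info m n l C2 \<psi> \<mu> B \<ge> real r)"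
    have rg: "rgmw m n r D1 D2 = (LEAST k. QL k)" by (simp add: rgmw_def QL_def)
    have QBn: "QB n" unfolding QB_def using Idm LId r by (intro bexI[of _ Id]) auto
    have BL: "\<exists>k\<le>\<mu>. QL k" if qb: "QB \<mu>" for \<mu>
    proof -
      obtain B where B: "B \<in> mats \<mu> n" "leak_info m n l C2 \<psi> \<mu> B \<ge> real r" using qb QB_def by blast
      have "real_of_int (dif (row_space \<mu> B)) \<ge> real r" using B LK by simp
      then have "dif (row_space \<mu> B) \<ge> int r" by linarith
      then have "QL (vdim (row_space \<mu> B))" using RS[OF B(1)] unfolding QL_def dif_def by blast
      then show ?thesis using RS[OF B(1)] by blast
    qed
    have LB: "QB k" if ql: "QL k" for k
    proof -
      obtain L where L: "L \<subseteq> vecs n" "vsubspace L" "vdim L = k" "dif L \<ge> int r"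
        using ql unfolding QL_def dif_def by blast
      obtain B where B: "B \<in> mats k n" "row_space k B = L" using SP[OF L(1,2)] L(3) by auto
      have "leak_info m n l C2 \<psi> k B = real_of_int (dif L)" using LK[OF B(1)] B(2) by simp
      then show ?thesis unfolding QB_def using B(1) L(4) by (intro bexI[of _ B]) auto
    qed
    obtain k0 where k0: "QL k0" using BL[OF QBn] by blast
    have "(LEAST k. QL k) = (LEAST \<mu>. QB \<mu>)"
    proof (rule antisym)
      have "QB (LEAST \<mu>. QB \<mu>)" using QBn by (rule LeastI)
      then obtain k where "k \<le> (LEAST \<mu>. QB \<mu>)" "QL k" using BL by blast
      then show "(LEAST k. QL k) \<le> (LEAST \<mu>. QB \<mu>)" using Least_le[of QL k] by linarith
    next
      have "QL (LEAST k. QL k)" using k0 by (rule LeastI)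
      then have "QB (LEAST k. QL k)" by (rule LB)
      then show "(LEAST \<mu>. QB \<mu>) \<le> (LEAST k. QL k)" by (rule Least_le)
    qed
    then show "rgmw m n r D1 D2 = (LEAST \<mu>. \<exists>B \<in> mats \<mu> n. leak_info m n l C2 \<psi> \<mu> B \<ge> real r)"
      using rg by (simp add: QB_def)
  qed

  have P2: "\<forall>\<mu>. \<mu> \<le> n \<longrightarrow>
            real_of_int (rdrsp m n \<mu> D1 D2) =
            Max {leak_info m n l C2 \<psi> \<mu>' B | \<mu>' B. \<mu>' \<le> \<mu> \<and> B \<in> mats \<mu>' n}"
  proof (intro allI impI)
    fix \<mu> assume "\<mu> \<le> n"
    define LS where "LS = {L :: (nat \<Rightarrow> 'a) set. L \<subseteq> vecs n \<and> vsubspace L \<and> vdim L \<le> \<mu>}"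
    have S1: "{int (mdim (D1 \<inter> rank_support m n L)) - int (mdim (D2 \<inter> rank_support m n L)) | L.
      L \<subseteq> vecs n \<and> vsubspace L \<and> vdim L \<le> \<mu>} = dif ` LS"
      by (auto simp: LS_def dif_def)
    have rd: "rdrsp m n \<mu> D1 D2 = Max (dif ` LS)" unfolding rdrsp_def S1 ..
    have S2: "{leak_info m n l C2 \<psi> \<mu>' B | \<mu>' B. \<mu>' \<le> \<mu> \<and> B \<in> mats \<mu>' n} = real_of_int ` dif ` LS"
    proof
      show "{leak_info m n l C2 \<psi> \<mu>' B | \<mu>' B. \<mu>' \<le> \<mu> \<and> B \<in> mats \<mu>' n} \<subseteq> real_of_int ` dif ` LS"
      proof clarify
        fix \<mu>' and B :: "nat \<Rightarrow> nat \<Rightarrow> 'a" assume "\<mu>' \<le> \<mu>" "B \<in> mats \<mu>' n"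
        then have "row_space \<mu>' B \<in> LS" using RS[of B \<mu>'] by (auto simp: LS_def)
        then show "leak_info m n l C2 \<psi> \<mu>' B \<in> real_of_int ` dif ` LS"
          using LK[OF \<open>B \<in> mats \<mu>' n\<close>] by blast
      qed
      show "real_of_int ` dif ` LS \<subseteq> {leak_info m n l C2 \<psi> \<mu>' B | \<mu>' B. \<mu>' \<le> \<mu> \<and> B \<in> mats \<mu>' n}"
      proof clarify
        fix L assume "L \<in> LS"
        then have L: "L \<subseteq> vecs n" "vsubspace L" "vdim L \<le> vdim L" "vdim L \<le> \<mu>" by (auto simp: LS_def)
        obtain B where B: "B \<in> mats (vdim L) n" "row_space (vdim L) B = L" using SP[OF L(1-3)] by blast
        have "real_of_int (dif L) = leak_info m n l C2 \<psi> (vdim L) B" using LK[OF B(1)] B(2) by simp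
        then show "\<exists>\<mu>' B. real_of_int (dif L) = leak_info m n l C2 \<psi> \<mu>' B \<and> \<mu>' \<le> \<mu> \<and> B \<in> mats \<mu>' n"
          using B(1) L(4) by blast
      qed
    qed
    have finLS: "finite LS"
    proof (rule finite_subset[of _ "Pow (vecs n)"])
      show "LS \<subseteq> Pow (vecs n)" by (auto simp: LS_def)
    qed simp
    have "(0::nat \<Rightarrow> nat \<Rightarrow> 'a) \<in> mats 0 n" by (simp add: mats_def)
    then have "row_space 0 (0::nat \<Rightarrow> nat \<Rightarrow> 'a) \<in> LS" using RS[of 0 0] by (auto simp: LS_def)
    then have ne: "dif ` LS \<noteq> {}" by blast
    have mono: "mono (real_of_int)" by (rule monoI) simp
    show "real_of_int (rdrsp m n \<mu> D1 D2) = Max {leak_info m n l C2 \<psi> \<mu>' B | \<mu>' B. \<mu>' \<le> \<mu> \<and> B \<in> mats \<mu>' n}"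
      unfolding rd S2 using mono_Max_commute[OF mono _ ne] finLS by simp
  qed

  have P3: "int (rel_rank_dist m D1 D2) - 1 =
            int (GREATEST \<mu>. \<forall>B \<in> mats \<mu> n. leak_info m n l C2 \<psi> \<mu> B = 0)"
  proof -
    define d where "d = rel_rank_dist m D1 D2"
    define QR where "QR = (\<lambda>k. \<exists>C \<in> D1. C \<notin> D2 \<and> rk m C = k)"
    have dd: "d = (LEAST k. QR k)" by (simp add: d_def rel_rank_dist_def QR_def)
    have VSId: "VS.subspace (row_space n Id)" using RS[OF Idm] by blast
    have "0 < dif (row_space n Id)" using LK[OF Idm] LId lpos by simp
    then obtain C where "C \<in> D1" "C \<notin> D2" using difp[OF VSId] by blast
    then have "QR (rk m C)" unfolding QR_def by blast
    then have QRd: "QR d" unfolding dd by (rule LeastI)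
    then obtain C0 where C0: "C0 \<in> D1" "C0 \<notin> D2" "rk m C0 = d" unfolding QR_def by blast
    have C0m: "C0 \<in> mats m n" using C0(1) D1m by blast
    have RC0: "row_space m C0 \<subseteq> vecs n" "VS.subspace (row_space m C0)" "vdim (row_space m C0) \<le> m"
      using row_space_props[OF C0m] by auto
    have C0V: "C0 \<in> rank_support m n (row_space m C0)" using C0m by (simp add: rank_support_def)
    have dpos: "d \<ge> 1"
    proof (rule ccontr)
      assume "\<not> d \<ge> 1"
      then have "vdim (row_space m C0) = 0" using C0(3) by (simp add: rk_def)
      moreover have "finite (row_space m C0)" using RC0(1) finite_subset finite_vecs by blast
      ultimately have "card (row_space m C0) = 1" using card_subspace_vs[OF RC0(2)] by simp
      moreover have "0 \<in> row_space m C0" using VS.subspace_0[OF RC0(2)] .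
      ultimately have rs0: "row_space m C0 = {0}" by (metis card_1_singletonE singletonD)
      have "C0 = 0"
      proof (intro ext)
        fix i j
        show "C0 i j = 0 i j"
        proof (cases "i < m")
          case True
          then have "C0 i \<in> row_space m C0" unfolding row_space_def by (intro VS.span_base) auto
          then have "C0 i = 0" using rs0 by simp
          then show ?thesis by (metis zero_fun_apply)
        next
          case False then show ?thesis using C0m by (simp add: mats_def)
        qed
      qed
      moreover have "0 \<in> D2" unfolding D2_def using MS.subspace_0[OF subspace_dual] .
      ultimately show False using C0(2) by simp
    qed
    have iff: "(\<forall>B \<in> mats \<mu> n. leak_info m n l C2 \<psi> \<mu> B = 0) \<longleftrightarrow> \<mu> < d" for \<mu>
    proof
      assume all: "\<forall>B \<in> mats \<mu> n. leak_info m n l C2 \<psi> \<mu> B = 0"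
      show "\<mu> < d"
      proof (rule ccontr)
        assume "\<not> \<mu> < d"
        then have "vdim (row_space m C0) \<le> \<mu>" using C0(3) by (simp add: rk_def)
        then obtain B where B: "B \<in> mats \<mu> n" "row_space \<mu> B = row_space m C0"
          using SP[OF RC0(1,2)] by blast
        have "0 < dif (row_space m C0)" using difp[OF RC0(2)] C0 C0V by blast
        then have "leak_info m n l C2 \<psi> \<mu> B \<noteq> 0" using LK[OF B(1)] B(2) by simp
        then show False using all B(1) by blast
      qed
    next
      assume lt: "\<mu> < d"
      show "\<forall>B \<in> mats \<mu> n. leak_info m n l C2 \<psi> \<mu> B = 0"
      proof
        fix B :: "nat \<Rightarrow> nat \<Rightarrow> 'a" assume B: "B \<in> mats \<mu> n"
        let ?L = "row_space \<mu> B"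
        have RL: "?L \<subseteq> vecs n" "VS.subspace ?L" "vdim ?L \<le> \<mu>" using RS[OF B] by auto
        have "\<not> 0 < dif ?L"
        proof
          assume "0 < dif ?L"
          then obtain C where C: "C \<in> D1" "C \<in> rank_support m n ?L" "C \<notin> D2"
            using difp[OF RL(2)] by blast
          have Cm: "C \<in> mats m n" using C(1) D1m by blast
          have "row_space m C \<subseteq> ?L" using C(2) by (simp add: rank_support_def)
          moreover have "VS.subspace (row_space m C)" using row_space_props[OF Cm] by blast
          moreover have "finite ?L" using RL(1) finite_subset finite_vecs by blast
          ultimately have "rk m C \<le> vdim ?L" unfolding rk_def using vdim_mono RL(2) by blast
          then have "rk m C < d" using RL(3) lt by linarith
          moreover have "QR (rk m C)" using C unfolding QR_def by blast
          then have "d \<le> rk m C" unfolding dd by (rule Least_le)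
          ultimately show False by linarith
        qed
        then have "dif ?L = 0" using difp[OF RL(2)] by linarith
        then show "leak_info m n l C2 \<psi> \<mu> B = 0" using LK[OF B] by simp
      qed
    qed
    have "(GREATEST \<mu>. \<forall>B \<in> mats \<mu> n. leak_info m n l C2 \<psi> \<mu> B = 0) = d - 1"
    proof (rule Greatest_equality)
      show "\<forall>B \<in> mats (d - 1) n. leak_info m n l C2 \<psi> (d - 1) B = 0" using iff dpos by simp
    next
      fix y assume "\<forall>B \<in> mats y n. leak_info m n l C2 \<psi> y B = 0"
      then show "y \<le> d - 1" using iff by fastforce
    qed
    then show ?thesis using dpos by (simp add: d_def of_nat_diff)
  qed
  show ?thesis using P1 P2 P3 by (simp add: D1_def D2_def)
qed


end
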